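(* Let $\mathcal V$ be a finite set of variables, $\mathcal P$ a finite set of labels, and $\mathcal C$ a finite set of nonempty subsets (hyperedges) of $\mathcal V$. For each $C\in\mathcal C$ let $\mathcal D_C\subseteq\mathcal P^C$ be a set of labelings of $C$ and let $\hat\theta_{C,\vec d}\le 0$ for $\vec d\in\mathcal D_C$, defining the sparse pattern-based potential $\theta_C(\vec x_C)=\hat\theta_{C,\vec d}$ if $\vec x_C=\vec d\in\mathcal D_C$ and $\theta_C(\vec x_C)=0$ otherwise. For binary variables $y_{ip}\in\{0,1\}$ ($i\in\mathcal V,p\in\mathcal P$) and $z_{C,\vec d}\in\{0,1\}$ ($C\in\mathcal C,\vec d\in\mathcal D_C$) let $$E^*_I(\vec y,\vec z)=-\sum_{C\in\mathcal C}\sum_{\vec d\in\mathcal D_C}\hat\theta_{C,\vec d}\Big((|C|-1)z_{C,\vec d}-\sum_{\ell\in C}y_{\ell d_\ell}z_{C,\vec d}\Big),$$ and for $\vec\lambda\in\mathbb R^{\mathcal V}$ let $D(\vec\lambda)=\min_{\vec y,\vec z\text{ binary}}\Big(E^*_I(\vec y,\vec z)+\sum_{i\in\mathcal V}\lambda_i\big(\sum_{p\in\mathcal P}y_{ip}-1\big)\Big)$. Then $\max_{\vec\lambda\in\mathbb R^{\mathcal V}}D(\vec\lambda)$ equals the optimal value of the linear program $$\min_{\vec y}\ \sum_{C\in\mathcal C}\sum_{\vec d\in\mathcal D_C}\hat\theta_{C,\vec d}\,y_{C,\vec d}$$ subject to $y_{ip}\in[0,1]$ for all $i\in\mathcal V,p\in\mathcal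 P$; $y_{C,\vec d}\in[0,1]$ for all $C\in\mathcal C,\vec d\in\mathcal D_C$; $y_{C,\vec d}\le y_{\ell d_\ell}$ for all $C\in\mathcal C$, $\vec d\in\mathcal D_C$, $\ell\in C$; and $\sum_{p\in\mathcal P}y_{ip}=1$ for all $i\in\mathcal V$.
   Context: A labeling $\vec d\in\mathcal P^C$ of a hyperedge $C$ is a map $C\to\mathcal P$, and $d_\ell$ denotes its value at $\ell\in C$. The energy to be minimized is $E(\vec x)=\sum_{C\in\mathcal C}\theta_C(\vec x_C)$ over $\vec x\in\mathcal P^{\mathcal V}$; $y_{ip}$ are indicator variables of $x_i=p$, $E^*_I$ is a pairwise reformulation of the energy with auxiliary binary variables $z_{C,\vec d}$, and $D$ is the Lagrangian dual obtained by relaxing the consistency constraints $\sum_p y_{ip}=1$. *)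

theory Defs
  imports "HOL-Library.FuncSet" Complex_Main
begin

(* Labelings of a hyperedge C are extensional maps C -> P (elements of PiE C P).
   Variables: y i p and z C d, real-valued. *)

definition E_star ::
  "'v set set \<Rightarrow> ('v set \<Rightarrow> ('v \<Rightarrow> 'p) set) \<Rightarrow> ('v set \<Rightarrow> ('v \<Rightarrow> 'p) \<Rightarrow> real)
   \<Rightarrow> ('v \<Rightarrow> 'p \<Rightarrow> real) \<Rightarrow> ('v set \<Rightarrow> ('v \<Rightarrow> 'p) \<Rightarrow> real) \<Rightarrow> real" where
  "E_star Cs D th y z =
     - (\<Sum>C\<in>Cs. \<Sum>d\<in>D C. th C d *
          ((real (card C) - 1) * z C d - (\<Sum>l\<in>C. y l (d l) * z C d)))"

definition binary_y :: "'v set \<Rightarrow> 'p set \<Rightarrow> ('v \<Rightarrow> 'p \<Rightarrow> real) \<Rightarrow> bool" where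
  "binary_y V P y \<longleftrightarrow> (\<forall>i\<in>V. \<forall>p\<in>P. y i p \<in> {0, 1})"

definition binary_z ::
  "'v set set \<Rightarrow> ('v set \<Rightarrow> ('v \<Rightarrow> 'p) set) \<Rightarrow> ('v set \<Rightarrow> ('v \<Rightarrow> 'p) \<Rightarrow> real) \<Rightarrow> bool" where
  "binary_z Cs D z \<longleftrightarrow> (\<forall>C\<in>Cs. \<forall>d\<in>D C. z C d \<in> {0, 1})"

definition lagr_dual ::
  "'v set \<Rightarrow> 'p set \<Rightarrow> 'v set set \<Rightarrow> ('v set \<Rightarrow> ('v \<Rightarrow> 'p) set)
   \<Rightarrow> ('v set \<Rightarrow> ('v \<Rightarrow> 'p) \<Rightarrow> real) \<Rightarrow> ('v \<Rightarrow> real) \<Rightarrow> real" where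
  "lagr_dual V P Cs D th lam =
     Min {E_star Cs D th y z + (\<Sum>i\<in>V. lam i * ((\<Sum>p\<in>P. y i p) - 1)) | y z.
            binary_y V P y \<and> binary_z Cs D z}"

definition lp_feasible ::
  "'v set \<Rightarrow> 'p set \<Rightarrow> 'v set set \<Rightarrow> ('v set \<Rightarrow> ('v \<Rightarrow> 'p) set)
   \<Rightarrow> ('v \<Rightarrow> 'p \<Rightarrow> real) \<Rightarrow> ('v set \<Rightarrow> ('v \<Rightarrow> 'p) \<Rightarrow> real) \<Rightarrow> bool" where
  "lp_feasible V P Cs D yv yc \<longleftrightarrow>
     (\<forall>i\<in>V. \<forall>p\<in>P. 0 \<le> yv i p \<and> yv i p \<le> 1) \<and>
     (\<forall>C\<in>Cs. \<forall>d\<in>D C. 0 \<le> yc C d \<and> yc C d \<le> 1) \<and>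
     (\<forall>C\<in>Cs. \<forall>d\<in>D C. \<forall>l\<in>C. yc C d \<le> yv l (d l)) \<and>
     (\<forall>i\<in>V. (\<Sum>p\<in>P. yv i p) = 1)"

definition lp_obj ::
  "'v set set \<Rightarrow> ('v set \<Rightarrow> ('v \<Rightarrow> 'p) set) \<Rightarrow> ('v set \<Rightarrow> ('v \<Rightarrow> 'p) \<Rightarrow> real)
   \<Rightarrow> ('v set \<Rightarrow> ('v \<Rightarrow> 'p) \<Rightarrow> real) \<Rightarrow> real" where
  "lp_obj Cs D th yc = (\<Sum>C\<in>Cs. \<Sum>d\<in>D C. th C d * yc C d)"

end

theory Submission
  imports Defs
begin


definition comb :: "real \<Rightarrow> ('i \<Rightarrow> real) \<times> real \<Rightarrow> ('i \<Rightarrow> real) \<times> real \<Rightarrow> ('i \<Rightarrow> real) \<times> real" where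
  "comb \<alpha> x y = (\<lambda>i. \<alpha> * fst x i + (1-\<alpha>) * fst y i, \<alpha> * snd x + (1-\<alpha>) * snd y)"

inductive_set chull :: "(('i \<Rightarrow> real) \<times> real) set \<Rightarrow> (('i \<Rightarrow> real) \<times> real) set" for K where
  base: "x \<in> K \<Longrightarrow> x \<in> chull K"
| step: "x \<in> chull K \<Longrightarrow> y \<in> chull K \<Longrightarrow> 0 \<le> \<alpha> \<Longrightarrow> \<alpha> \<le> 1 \<Longrightarrow> comb \<alpha> x y \<in> chull K"

lemma chull_sub: "x \<in> chull K' \<Longrightarrow> K' \<subseteq> chull K \<Longrightarrow> x \<in> chull K"
  by (induction rule: chull.induct) (auto intro: chull.step)

lemma lin_comb: "snd (comb \<alpha> x y) + (\<Sum>i\<in>I. lam i * fst (comb \<alpha> x y) i)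
   = \<alpha> * (snd x + (\<Sum>i\<in>I. lam i * fst x i)) + (1-\<alpha>) * (snd y + (\<Sum>i\<in>I. lam i * fst y i))"
proof -
  have "(\<Sum>i\<in>I. lam i * (\<alpha> * fst x i + (1-\<alpha>) * fst y i))
     = \<alpha> * (\<Sum>i\<in>I. lam i * fst x i) + (1-\<alpha>) * (\<Sum>i\<in>I. lam i * fst y i)"
    by (simp add: distrib_left sum.distrib sum_distrib_left mult.left_commute)
  then show ?thesis by (simp add: comb_def algebra_simps)
qed

lemma fm:
  assumes "finite I"
  shows "finite K \<Longrightarrow> (\<forall>x\<in>chull K. (\<forall>i\<in>I. fst x i = 0) \<longrightarrow> v \<le> snd x)
    \<Longrightarrow> \<exists>lam. \<forall>k\<in>K. v \<le> snd k + (\<Sum>i\<in>I. lam i * fst k i)"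
  using assms
proof (induction I arbitrary: K rule: finite_induct)
  case empty
  then show ?case by (auto intro: chull.base)
next
  case (insert n I)
  define Kp where "Kp = {k\<in>K. fst k n > 0}"
  define Km where "Km = {k\<in>K. fst k n < 0}"
  define K0 where "K0 = {k\<in>K. fst k n = 0}"
  define cf where "cf p q = comb (- fst q n / (fst p n - fst q n)) p q" for p q :: "('a \<Rightarrow> real) \<times> real"
  define K' where "K' = K0 \<union> (\<lambda>(p,q). cf p q) ` (Kp \<times> Km)"
  have fin: "finite Kp" "finite Km" "finite K0" "finite K'" using insert.prems(1)
    by (auto simp: Kp_def Km_def K0_def K'_def)
  have cfn: "fst (cf p q) n = 0" if "p \<in> Kp" "q \<in> Km" for p q
  proof -
    have "fst p n - fst q n > 0" using that by (auto simp: Kp_def Km_def)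
    then show ?thesis by (simp add: cf_def comb_def field_simps)
  qed
  have cfin: "cf p q \<in> chull K" if "p \<in> Kp" "q \<in> Km" for p q
  proof -
    have ap: "fst p n > 0" and aq: "fst q n < 0" using that by (auto simp: Kp_def Km_def)
    have "0 \<le> - fst q n / (fst p n - fst q n)" using ap aq by (intro divide_nonneg_pos) auto
    moreover have "- fst q n / (fst p n - fst q n) \<le> 1" using ap aq by (subst pos_divide_le_eq) auto
    ultimately show ?thesis unfolding cf_def using that
      by (intro chull.step chull.base) (auto simp: Kp_def Km_def)
  qed
  have K'sub: "K' \<subseteq> chull K" using cfin by (auto simp: K'_def K0_def intro: chull.base)
  have zero: "fst x n = 0" if "x \<in> chull K'" for x
    using that
  proof (induction rule: chull.induct)
    case (base x) then show ?case using cfn by (auto simp: K'_def K0_def)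
  next
    case (step x y \<alpha>) then show ?case by (simp add: comb_def)
  qed
  have hyp': "\<forall>x\<in>chull K'. (\<forall>i\<in>I. fst x i = 0) \<longrightarrow> v \<le> snd x"
  proof (intro ballI impI)
    fix x assume x: "x \<in> chull K'" and z: "\<forall>i\<in>I. fst x i = 0"
    have "x \<in> chull K" using chull_sub[OF x K'sub] .
    moreover have "\<forall>i\<in>insert n I. fst x i = 0" using z zero[OF x] by auto
    ultimately show "v \<le> snd x" using insert.prems(2) by auto
  qed
  obtain lam' where lam': "\<forall>k\<in>K'. v \<le> snd k + (\<Sum>i\<in>I. lam' i * fst k i)"
    using insert.IH[OF fin(4) hyp'] by blast
  define h where "h k = snd k + (\<Sum>i\<in>I. lam' i * fst k i)" for k
  define lo where "lo k = (v - h k) / fst k n" for k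
  have pair: "lo p \<le> lo q" if "p \<in> Kp" "q \<in> Km" for p q
  proof -
    have ap: "fst p n > 0" and aq: "fst q n < 0" using that by (auto simp: Kp_def Km_def)
    define \<alpha> where "\<alpha> = - fst q n / (fst p n - fst q n)"
    have "v \<le> h (cf p q)" using lam' that by (auto simp: h_def K'_def)
    also have "h (cf p q) = \<alpha> * h p + (1-\<alpha>) * h q" unfolding h_def cf_def \<alpha>_def by (rule lin_comb)
    finally have "v \<le> \<alpha> * h p + (1-\<alpha>) * h q" .
    then have "(fst p n - fst q n) * v \<le> (fst p n - fst q n) * (\<alpha> * h p + (1-\<alpha>) * h q)"
      using ap aq by (intro mult_left_mono) auto
    also have "\<dots> = - fst q n * h p + fst p n * h q"
    proof -
      have d: "fst p n - fst q n \<noteq> 0" using ap aq by auto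
      have e1: "(fst p n - fst q n) * \<alpha> = - fst q n" using d by (simp add: \<alpha>_def)
      have e2: "(fst p n - fst q n) * (1-\<alpha>) = fst p n" using e1 by (simp add: algebra_simps)
      have "(fst p n - fst q n) * (\<alpha> * h p + (1-\<alpha>) * h q)
          = ((fst p n - fst q n) * \<alpha>) * h p + ((fst p n - fst q n) * (1-\<alpha>)) * h q"
        by (simp add: algebra_simps)
      then show ?thesis using e1 e2 by simp
    qed
    finally have key: "(fst p n - fst q n) * v \<le> - fst q n * h p + fst p n * h q" .
    have "fst q n * (v - h p) \<ge> fst p n * (v - h q)" using key by (simp add: algebra_simps)
    then have "(v - h q) * fst p n \<le> (v - h p) * fst q n" by (simp add: algebra_simps)
    then have "v - h q \<le> ((v - h p) * fst q n) / fst p n" using ap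
      by (subst pos_le_divide_eq[OF ap])
    then show ?thesis unfolding lo_def using aq
      by (subst neg_le_divide_eq[OF aq]) simp
  qed
  define t where "t = (if Kp = {} then (if Km = {} then 0 else Min (lo ` Km)) else Max (lo ` Kp))"
  have tp: "lo p \<le> t" if "p \<in> Kp" for p
    using that fin by (auto simp: t_def)
  have tm: "t \<le> lo q" if "q \<in> Km" for q
    using that fin pair by (auto simp: t_def)
  show ?case
  proof (intro exI[of _ "lam'(n:=t)"] ballI)
    fix k assume k: "k \<in> K"
    have s1: "(\<Sum>i\<in>I. (lam'(n:=t)) i * fst k i) = (\<Sum>i\<in>I. lam' i * fst k i)"
      by (rule sum.cong) (use insert.hyps in auto)
    have s: "snd k + (\<Sum>i\<in>insert n I. (lam'(n:=t)) i * fst k i) = h k + t * fst k n"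
      using insert.hyps s1 by (simp add: h_def)
    have "v \<le> h k + t * fst k n"
    proof (cases "fst k n" "0::real" rule: linorder_cases)
      case less
      then have "k \<in> Km" using k by (auto simp: Km_def)
      then have "t \<le> (v - h k) / fst k n" using tm by (simp add: lo_def)
      then show ?thesis using less by (simp add: neg_le_divide_eq algebra_simps)
    next
      case equal
      then have "k \<in> K'" using k by (auto simp: K'_def K0_def)
      then show ?thesis using lam' equal by (auto simp: h_def)
    next
      case greater
      then have "k \<in> Kp" using k by (auto simp: Kp_def)
      then have "(v - h k) / fst k n \<le> t" using tp by (simp add: lo_def)
      then show ?thesis using greater by (simp add: pos_divide_le_eq algebra_simps)
    qed
    then show "v \<le> snd k + (\<Sum>i\<in>insert n I. (lam'(n:=t)) i * fst k i)"
      using s by simp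
  qed
qed

lemma fm_strict:
  assumes "finite I"
  shows "finite K \<Longrightarrow> (\<forall>x\<in>chull K. (\<forall>i\<in>I. fst x i = 0) \<longrightarrow> v < snd x)
    \<Longrightarrow> \<exists>lam. \<forall>k\<in>K. v < snd k + (\<Sum>i\<in>I. lam i * fst k i)"
  using assms
proof (induction I arbitrary: K rule: finite_induct)
  case empty
  then show ?case by (auto intro: chull.base)
next
  case (insert n I)
  define Kp where "Kp = {k\<in>K. fst k n > 0}"
  define Km where "Km = {k\<in>K. fst k n < 0}"
  define K0 where "K0 = {k\<in>K. fst k n = 0}"
  define cf where "cf p q = comb (- fst q n / (fst p n - fst q n)) p q" for p q :: "('a \<Rightarrow> real) \<times> real"
  define K' where "K' = K0 \<union> (\<lambda>(p,q). cf p q) ` (Kp \<times> Km)"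
  have fin: "finite Kp" "finite Km" "finite K0" "finite K'" using insert.prems(1)
    by (auto simp: Kp_def Km_def K0_def K'_def)
  have cfn: "fst (cf p q) n = 0" if "p \<in> Kp" "q \<in> Km" for p q
  proof -
    have "fst p n - fst q n > 0" using that by (auto simp: Kp_def Km_def)
    then show ?thesis by (simp add: cf_def comb_def field_simps)
  qed
  have cfin: "cf p q \<in> chull K" if "p \<in> Kp" "q \<in> Km" for p q
  proof -
    have ap: "fst p n > 0" and aq: "fst q n < 0" using that by (auto simp: Kp_def Km_def)
    have "0 \<le> - fst q n / (fst p n - fst q n)" using ap aq by (intro divide_nonneg_pos) auto
    moreover have "- fst q n / (fst p n - fst q n) \<le> 1" using ap aq by (subst pos_divide_le_eq) auto
    ultimately show ?thesis unfolding cf_def using that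
      by (intro chull.step chull.base) (auto simp: Kp_def Km_def)
  qed
  have K'sub: "K' \<subseteq> chull K" using cfin by (auto simp: K'_def K0_def intro: chull.base)
  have zero: "fst x n = 0" if "x \<in> chull K'" for x
    using that
  proof (induction rule: chull.induct)
    case (base x) then show ?case using cfn by (auto simp: K'_def K0_def)
  next
    case (step x y \<alpha>) then show ?case by (simp add: comb_def)
  qed
  have hyp': "\<forall>x\<in>chull K'. (\<forall>i\<in>I. fst x i = 0) \<longrightarrow> v < snd x"
  proof (intro ballI impI)
    fix x assume x: "x \<in> chull K'" and z: "\<forall>i\<in>I. fst x i = 0"
    have "x \<in> chull K" using chull_sub[OF x K'sub] .
    moreover have "\<forall>i\<in>insert n I. fst x i = 0" using z zero[OF x] by auto
    ultimately show "v < snd x" using insert.prems(2) by auto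
  qed
  obtain lam' where lam': "\<forall>k\<in>K'. v < snd k + (\<Sum>i\<in>I. lam' i * fst k i)"
    using insert.IH[OF fin(4) hyp'] by blast
  define h where "h k = snd k + (\<Sum>i\<in>I. lam' i * fst k i)" for k
  define lo where "lo k = (v - h k) / fst k n" for k
  have pair: "lo p < lo q" if "p \<in> Kp" "q \<in> Km" for p q
  proof -
    have ap: "fst p n > 0" and aq: "fst q n < 0" using that by (auto simp: Kp_def Km_def)
    define \<alpha> where "\<alpha> = - fst q n / (fst p n - fst q n)"
    have "v < h (cf p q)" using lam' that by (auto simp: h_def K'_def)
    also have "h (cf p q) = \<alpha> * h p + (1-\<alpha>) * h q" unfolding h_def cf_def \<alpha>_def by (rule lin_comb)
    finally have "v < \<alpha> * h p + (1-\<alpha>) * h q" .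
    then have "(fst p n - fst q n) * v < (fst p n - fst q n) * (\<alpha> * h p + (1-\<alpha>) * h q)"
      using ap aq by (intro mult_strict_left_mono) auto
    also have "\<dots> = - fst q n * h p + fst p n * h q"
    proof -
      have d: "fst p n - fst q n \<noteq> 0" using ap aq by auto
      have e1: "(fst p n - fst q n) * \<alpha> = - fst q n" using d by (simp add: \<alpha>_def)
      have e2: "(fst p n - fst q n) * (1-\<alpha>) = fst p n" using e1 by (simp add: algebra_simps)
      have "(fst p n - fst q n) * (\<alpha> * h p + (1-\<alpha>) * h q)
          = ((fst p n - fst q n) * \<alpha>) * h p + ((fst p n - fst q n) * (1-\<alpha>)) * h q"
        by (simp add: algebra_simps)
      then show ?thesis using e1 e2 by simp
    qed
    finally have key: "(fst p n - fst q n) * v < - fst q n * h p + fst p n * h q" .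
    have "fst q n * (v - h p) > fst p n * (v - h q)" using key by (simp add: algebra_simps)
    then have "(v - h q) * fst p n < (v - h p) * fst q n" by (simp add: algebra_simps)
    then have "v - h q < ((v - h p) * fst q n) / fst p n" using ap
      by (subst pos_less_divide_eq[OF ap])
    then show ?thesis unfolding lo_def using aq
      by (subst neg_less_divide_eq[OF aq]) simp
  qed
  define t where "t = (if Kp = {} then (if Km = {} then 0 else Min (lo ` Km) - 1)
     else (if Km = {} then Max (lo ` Kp) + 1 else (Max (lo ` Kp) + Min (lo ` Km)) / 2))"
  have mm: "Max (lo ` Kp) < Min (lo ` Km)" if "Kp \<noteq> {}" "Km \<noteq> {}"
  proof -
    have "Max (lo ` Kp) \<in> lo ` Kp" by (rule Max_in) (use that fin in auto)
    then obtain p where p: "p \<in> Kp" "Max (lo ` Kp) = lo p" by auto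
    have "Min (lo ` Km) \<in> lo ` Km" by (rule Min_in) (use that fin in auto)
    then obtain q where q: "q \<in> Km" "Min (lo ` Km) = lo q" by auto
    show ?thesis using p q pair by simp
  qed
  have tp: "lo p < t" if "p \<in> Kp" for p
  proof -
    have l: "lo p \<le> Max (lo ` Kp)" using that fin by auto
    have ne: "Kp \<noteq> {}" using that by auto
    show ?thesis
    proof (cases "Km = {}")
      case True then show ?thesis using l ne by (simp add: t_def)
    next
      case False then show ?thesis using l ne mm[OF ne False] by (simp add: t_def)
    qed
  qed
  have tm: "t < lo q" if "q \<in> Km" for q
  proof -
    have l: "Min (lo ` Km) \<le> lo q" using that fin by auto
    have ne: "Km \<noteq> {}" using that by auto
    show ?thesis
    proof (cases "Kp = {}")
      case True then show ?thesis using l ne by (simp add: t_def)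
    next
      case False then show ?thesis using l ne mm[OF False ne] by (simp add: t_def)
    qed
  qed
  show ?case
  proof (intro exI[of _ "lam'(n:=t)"] ballI)
    fix k assume k: "k \<in> K"
    have s1: "(\<Sum>i\<in>I. (lam'(n:=t)) i * fst k i) = (\<Sum>i\<in>I. lam' i * fst k i)"
      by (rule sum.cong) (use insert.hyps in auto)
    have s: "snd k + (\<Sum>i\<in>insert n I. (lam'(n:=t)) i * fst k i) = h k + t * fst k n"
      using insert.hyps s1 by (simp add: h_def)
    have "v < h k + t * fst k n"
    proof (cases "fst k n" "0::real" rule: linorder_cases)
      case less
      then have "k \<in> Km" using k by (auto simp: Km_def)
      then have "t < (v - h k) / fst k n" using tm by (simp add: lo_def)
      then show ?thesis using less by (simp add: neg_less_divide_eq algebra_simps)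
    next
      case equal
      then have "k \<in> K'" using k by (auto simp: K'_def K0_def)
      then show ?thesis using lam' equal by (auto simp: h_def)
    next
      case greater
      then have "k \<in> Kp" using k by (auto simp: Kp_def)
      then have "(v - h k) / fst k n < t" using tp by (simp add: lo_def)
      then show ?thesis using greater by (simp add: pos_divide_less_eq algebra_simps)
    qed
    then show "v < snd k + (\<Sum>i\<in>insert n I. (lam'(n:=t)) i * fst k i)"
      using s by simp
  qed
qed



lemma min0: "finite C \<Longrightarrow> l0 \<in> C \<Longrightarrow> (\<forall>l\<in>C. 0 \<le> g l) \<Longrightarrow> g l0 = (0::real) \<Longrightarrow> Min (g ` C) = 0"
  by (rule antisym) (auto intro!: Min.boundedI simp: Min_le_iff)

context
  fixes V :: "'v set" and P :: "'p set" and Cs :: "'v set set"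
    and D :: "'v set \<Rightarrow> ('v \<Rightarrow> 'p) set"
    and th :: "'v set \<Rightarrow> ('v \<Rightarrow> 'p) \<Rightarrow> real"
  assumes fV: "finite V" and fP: "finite P" and neP: "P \<noteq> {}"
    and fCs: "finite Cs"
    and CV: "\<And>C. C \<in> Cs \<Longrightarrow> C \<noteq> {} \<and> C \<subseteq> V"
    and DC: "\<And>C. C \<in> Cs \<Longrightarrow> D C \<subseteq> (C \<rightarrow>\<^sub>E P)"
    and thn: "\<And>C d. C \<in> Cs \<Longrightarrow> d \<in> D C \<Longrightarrow> th C d \<le> 0"
begin

definition "Y = {y::'v\<Rightarrow>'p\<Rightarrow>real. (\<forall>i p. y i p \<in> {0,1}) \<and> (\<forall>i p. (i \<notin> V \<or> p \<notin> P) \<longrightarrow> y i p = 0)}"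
definition "Z = {z::'v set\<Rightarrow>('v\<Rightarrow>'p)\<Rightarrow>real. (\<forall>C d. z C d \<in> {0,1}) \<and> (\<forall>C d. (C \<notin> Cs \<or> d \<notin> D C) \<longrightarrow> z C d = 0)}"
definition av :: "('v \<Rightarrow> 'p \<Rightarrow> real) \<Rightarrow> 'v \<Rightarrow> real" where
  "av y = (\<lambda>i. if i \<in> V then (\<Sum>p\<in>P. y i p) - 1 else 0)"
definition mC :: "('v \<Rightarrow> 'p \<Rightarrow> real) \<Rightarrow> 'v set \<Rightarrow> ('v \<Rightarrow> 'p) \<Rightarrow> real" where
  "mC x C d = Min ((\<lambda>l. x l (d l)) ` C)"
definition "pt x = (av x, \<Sum>C\<in>Cs. \<Sum>d\<in>D C. th C d * mC x C d)"
definition zy :: "('v \<Rightarrow> 'p \<Rightarrow> real) \<Rightarrow> 'v set \<Rightarrow> ('v \<Rightarrow> 'p) \<Rightarrow> real" where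
  "zy y C d = (if \<forall>l\<in>C. y l (d l) = 1 then 1 else 0)"
definition "gz y = (\<Sum>C\<in>Cs. \<Sum>d\<in>D C. th C d * zy y C d)"
definition "KK = (\<lambda>y. (av y, gz y)) ` Y"
definition "Tl lam y z = E_star Cs D th y z + (\<Sum>i\<in>V. lam i * ((\<Sum>p\<in>P. y i p) - 1))"
definition "SS lam = {Tl lam y z | y z. binary_y V P y \<and> binary_z Cs D z}"
definition "cy y = (\<lambda>i p. if i \<in> V \<and> p \<in> P then y i p else 0)"
definition "cz z = (\<lambda>C d. if C \<in> Cs \<and> d \<in> D C then z C d else 0)"

lemma LD: "lagr_dual V P Cs D th lam = Min (SS lam)"
  by (simp add: lagr_dual_def SS_def Tl_def)

lemma finC: "C \<in> Cs \<Longrightarrow> finite C"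
  using CV fV finite_subset by blast

lemma finD: "C \<in> Cs \<Longrightarrow> finite (D C)"
  using DC finC finite_PiE fP finite_subset by (metis)

lemma dl: "C \<in> Cs \<Longrightarrow> d \<in> D C \<Longrightarrow> l \<in> C \<Longrightarrow> l \<in> V \<and> d l \<in> P"
proof -
  assume a: "C \<in> Cs" "d \<in> D C" "l \<in> C"
  have "l \<in> V" using CV[OF a(1)] a(3) by blast
  moreover have "d \<in> C \<rightarrow>\<^sub>E P" using DC[OF a(1)] a(2) by blast
  then have "d l \<in> P" using a(3) by (auto simp: PiE_def Pi_def)
  ultimately show ?thesis by blast
qed

lemma finY: "finite Y"
proof -
  let ?h = "\<lambda>y. restrict (\<lambda>(i,p). y i p) (V \<times> P)"
  have "inj_on ?h Y"
  proof (rule inj_onI)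
    fix y1 y2 assume y: "y1 \<in> Y" "y2 \<in> Y" and e: "?h y1 = ?h y2"
    show "y1 = y2"
    proof (intro ext)
      fix i p
      show "y1 i p = y2 i p"
      proof (cases "i \<in> V \<and> p \<in> P")
        case True then show ?thesis using fun_cong[OF e, of "(i,p)"] by auto
      next
        case False then show ?thesis using y by (auto simp: Y_def)
      qed
    qed
  qed
  moreover have "?h ` Y \<subseteq> PiE (V \<times> P) (\<lambda>_. {0,1})"
  proof (rule image_subsetI)
    fix y assume "y \<in> Y"
    then have "\<forall>x\<in>V \<times> P. (\<lambda>(a,b). y a b) x \<in> {0::real,1}" by (auto simp: Y_def)
    then show "?h y \<in> PiE (V \<times> P) (\<lambda>_. {0,1})" by (subst restrict_PiE_iff)
  qed
  moreover have "finite (PiE (V \<times> P) (\<lambda>_. {0::real,1}))" using fV fP by (intro finite_PiE) auto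
  ultimately show ?thesis using finite_imageD finite_subset by metis
qed

lemma finZ: "finite Z"
proof -
  let ?h = "\<lambda>z. restrict (\<lambda>(C,d). z C d) (Sigma Cs D)"
  have "inj_on ?h Z"
  proof (rule inj_onI)
    fix y1 y2 assume y: "y1 \<in> Z" "y2 \<in> Z" and e: "?h y1 = ?h y2"
    show "y1 = y2"
    proof (intro ext)
      fix i p
      show "y1 i p = y2 i p"
      proof (cases "i \<in> Cs \<and> p \<in> D i")
        case True then show ?thesis using fun_cong[OF e, of "(i,p)"] by auto
      next
        case False then show ?thesis using y by (auto simp: Z_def)
      qed
    qed
  qed
  moreover have "?h ` Z \<subseteq> PiE (Sigma Cs D) (\<lambda>_. {0,1})"
  proof (rule image_subsetI)
    fix y assume "y \<in> Z"
    then have "\<forall>x\<in>Sigma Cs D. (\<lambda>(a,b). y a b) x \<in> {0::real,1}" by (auto simp: Z_def)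
    then show "?h y \<in> PiE (Sigma Cs D) (\<lambda>_. {0,1})" by (subst restrict_PiE_iff)
  qed
  moreover have "finite (PiE (Sigma Cs D) (\<lambda>_. {0::real,1}))" using fCs finD by (intro finite_PiE) auto
  ultimately show ?thesis using finite_imageD finite_subset by metis
qed

lemma finK: "finite KK" using finY by (simp add: KK_def)

lemma cy_Y: "binary_y V P y \<Longrightarrow> cy y \<in> Y"
  by (auto simp: binary_y_def cy_def Y_def)

lemma cz_Z: "binary_z Cs D z \<Longrightarrow> cz z \<in> Z"
  by (auto simp: binary_z_def cz_def Z_def)

lemma Tl_c: "Tl lam (cy y) (cz z) = Tl lam y z"
proof -
  have "E_star Cs D th (cy y) (cz z) = E_star Cs D th y z"
    unfolding E_star_def
    by (intro arg_cong[where f=uminus] sum.cong refl arg_cong2[where f="(*)"] arg_cong2[where f="(-)"])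
       (auto simp: cy_def cz_def dl)
  moreover have "(\<Sum>i\<in>V. lam i * ((\<Sum>p\<in>P. cy y i p) - 1)) = (\<Sum>i\<in>V. lam i * ((\<Sum>p\<in>P. y i p) - 1))"
    by (intro sum.cong refl arg_cong2[where f="(*)"] arg_cong2[where f="(-)"]) (auto simp: cy_def)
  ultimately show ?thesis by (simp add: Tl_def)
qed

lemma finS: "finite (SS lam)"
proof -
  have "SS lam \<subseteq> (\<lambda>(y,z). Tl lam y z) ` (Y \<times> Z)"
  proof
    fix s assume "s \<in> SS lam"
    then obtain y z where s: "s = Tl lam y z" "binary_y V P y" "binary_z Cs D z" by (auto simp: SS_def)
    then have "s = Tl lam (cy y) (cz z)" by (simp add: Tl_c)
    then show "s \<in> (\<lambda>(y,z). Tl lam y z) ` (Y \<times> Z)" using cy_Y[OF s(2)] cz_Z[OF s(3)] by auto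
  qed
  then show ?thesis using finY finZ finite_subset by blast
qed

lemma neS: "SS lam \<noteq> {}"
proof -
  have "Tl lam (\<lambda>_ _. 0) (\<lambda>_ _. 0) \<in> SS lam" unfolding SS_def
    by (auto simp: binary_y_def binary_z_def)
  then show ?thesis by auto
qed

lemma Ybin: "y \<in> Y \<Longrightarrow> y i p = 0 \<or> y i p = 1"
  by (auto simp: Y_def)

lemma zy_bin: "zy y C d = 0 \<or> zy y C d = 1" by (simp add: zy_def)

lemma Tl_eq: "Tl lam y z = E_star Cs D th y z + (\<Sum>i\<in>V. lam i * av y i)"
  unfolding Tl_def av_def by (simp cong: sum.cong)

lemma sum_le_cm1:
  assumes y: "y \<in> Y" and C: "C \<in> Cs" and l0: "l0 \<in> C" "y l0 (d l0) = 0"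
  shows "(\<Sum>l\<in>C. y l (d l)) \<le> real (card C) - 1"
proof -
  have fC: "finite C" using finC[OF C] .
  have "(\<Sum>l\<in>C. y l (d l)) = y l0 (d l0) + (\<Sum>l\<in>C - {l0}. y l (d l))"
    using fC l0 by (simp add: sum.remove)
  have b: "y l (d l) \<le> 1" for l using Ybin[OF y, of l "d l"] by auto
  have s2: "(\<Sum>l\<in>C - {l0}. y l (d l)) \<le> real (card (C - {l0})) * 1"
    by (rule sum_bounded_above) (use b in auto)
  have "card C > 0" using fC l0(1) card_gt_0_iff by blast
  then have c1: "card C \<ge> 1" by simp
  have "real (card (C - {l0})) = real (card C) - 1"
    using fC l0(1) c1 by (simp add: card_Diff_singleton of_nat_diff)
  then show ?thesis using s2 l0(2) \<open>(\<Sum>l\<in>C. y l (d l)) = _\<close> by simp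
qed

lemma term_ge:
  assumes y: "y \<in> Y" and C: "C \<in> Cs" and d: "d \<in> D C" and zz: "zz = 0 \<or> zz = (1::real)"
  shows "th C d * zy y C d \<le> - (th C d * ((real (card C) - 1) * zz - (\<Sum>l\<in>C. y l (d l) * zz)))"
proof (cases "\<forall>l\<in>C. y l (d l) = 1")
  case True
  then have "(\<Sum>l\<in>C. y l (d l) * zz) = real (card C) * zz" by simp
  then show ?thesis using True thn[OF C d] zz by (auto simp: zy_def algebra_simps)
next
  case False
  then obtain l0 where l0: "l0 \<in> C" "y l0 (d l0) = 0" using Ybin[OF y] by blast
  have s: "(\<Sum>l\<in>C. y l (d l)) \<le> real (card C) - 1" using sum_le_cm1[where d=d, OF y C l0] .
  have e: "(\<Sum>l\<in>C. y l (d l) * zz) = zz * (\<Sum>l\<in>C. y l (d l))" by (simp add: sum_distrib_left mult.commute)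
  have "0 \<le> (- th C d) * (zz * ((real (card C) - 1) - (\<Sum>l\<in>C. y l (d l))))"
    using thn[OF C d] zz s by (intro mult_nonneg_nonneg) auto
  moreover have "zy y C d = 0" using False by (simp add: zy_def)
  ultimately show ?thesis using e by (simp add: algebra_simps)
qed

lemma term_eq:
  assumes y: "y \<in> Y" and C: "C \<in> Cs"
  shows "- (th C d * ((real (card C) - 1) * zy y C d - (\<Sum>l\<in>C. y l (d l) * zy y C d))) = th C d * zy y C d"
proof (cases "\<forall>l\<in>C. y l (d l) = 1")
  case True
  then have "(\<Sum>l\<in>C. y l (d l) * zy y C d) = real (card C)" by (simp add: zy_def)
  then show ?thesis using True by (simp add: zy_def algebra_simps)
next
  case False
  then show ?thesis by (simp add: zy_def)
qed

lemma E_ge: "y \<in> Y \<Longrightarrow> binary_z Cs D z \<Longrightarrow> gz y \<le> E_star Cs D th y z"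
  unfolding E_star_def gz_def sum_negf[symmetric]
  by (intro sum_mono term_ge) (auto simp: binary_z_def)

lemma E_eq: "y \<in> Y \<Longrightarrow> E_star Cs D th y (zy y) = gz y"
  unfolding E_star_def gz_def sum_negf[symmetric]
  by (intro sum.cong refl term_eq)

lemma Ybinary: "y \<in> Y \<Longrightarrow> binary_y V P y" by (auto simp: Y_def binary_y_def)

lemma D_le: "y \<in> Y \<Longrightarrow> Min (SS lam) \<le> gz y + (\<Sum>i\<in>V. lam i * av y i)"
proof -
  assume y: "y \<in> Y"
  have "binary_z Cs D (zy y)" using zy_bin by (auto simp: binary_z_def)
  then have "Tl lam y (zy y) \<in> SS lam" using Ybinary[OF y] by (auto simp: SS_def)
  then have "Min (SS lam) \<le> Tl lam y (zy y)" using finS by simp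
  then show ?thesis using E_eq[OF y] by (simp add: Tl_eq)
qed

lemma D_ge: "(\<forall>y\<in>Y. c \<le> gz y + (\<Sum>i\<in>V. lam i * av y i)) \<Longrightarrow> c \<le> Min (SS lam)"
proof -
  assume h: "\<forall>y\<in>Y. c \<le> gz y + (\<Sum>i\<in>V. lam i * av y i)"
  show ?thesis
  proof (rule Min.boundedI[OF finS neS])
    fix s assume "s \<in> SS lam"
    then obtain y z where s: "s = Tl lam y z" "binary_y V P y" "binary_z Cs D z" by (auto simp: SS_def)
    then have s': "s = Tl lam (cy y) (cz z)" by (simp add: Tl_c)
    have y': "cy y \<in> Y" using cy_Y[OF s(2)] .
    have "binary_z Cs D (cz z)" using cz_Z[OF s(3)] by (auto simp: Z_def binary_z_def)
    then have "gz (cy y) \<le> E_star Cs D th (cy y) (cz z)" using E_ge[OF y'] by blast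
    then show "c \<le> s" using h y' s' by (force simp: Tl_eq)
  qed
qed

lemma D_gt: "(\<forall>y\<in>Y. c < gz y + (\<Sum>i\<in>V. lam i * av y i)) \<Longrightarrow> c < Min (SS lam)"
proof -
  assume h: "\<forall>y\<in>Y. c < gz y + (\<Sum>i\<in>V. lam i * av y i)"
  show ?thesis
  proof (subst Min_gr_iff[OF finS neS], intro ballI)
    fix s assume "s \<in> SS lam"
    then obtain y z where s: "s = Tl lam y z" "binary_y V P y" "binary_z Cs D z" by (auto simp: SS_def)
    then have s': "s = Tl lam (cy y) (cz z)" by (simp add: Tl_c)
    have y': "cy y \<in> Y" using cy_Y[OF s(2)] .
    have "binary_z Cs D (cz z)" using cz_Z[OF s(3)] by (auto simp: Z_def binary_z_def)
    then have "gz (cy y) \<le> E_star Cs D th (cy y) (cz z)" using E_ge[OF y'] by blast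
    then show "c < s" using h y' s' by (force simp: Tl_eq)
  qed
qed

lemma weak: "x \<in> chull KK \<Longrightarrow> Min (SS lam) \<le> snd x + (\<Sum>i\<in>V. lam i * fst x i)"
proof (induction rule: chull.induct)
  case (base x) then show ?case using D_le by (auto simp: KK_def)
next
  case (step x y \<alpha>)
  let ?M = "Min (SS lam)"
  have "?M = \<alpha> * ?M + (1-\<alpha>) * ?M" by (simp add: algebra_simps)
  also have "\<dots> \<le> \<alpha> * (snd x + (\<Sum>i\<in>V. lam i * fst x i)) + (1-\<alpha>) * (snd y + (\<Sum>i\<in>V. lam i * fst y i))"
    using step by (intro add_mono mult_left_mono) auto
  also have "\<dots> = snd (comb \<alpha> x y) + (\<Sum>i\<in>V. lam i * fst (comb \<alpha> x y) i)" by (rule lin_comb[symmetric])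
  finally show ?case .
qed

definition "lp_box yv yc \<longleftrightarrow>
     (\<forall>i\<in>V. \<forall>p\<in>P. 0 \<le> yv i p \<and> yv i p \<le> 1) \<and>
     (\<forall>C\<in>Cs. \<forall>d\<in>D C. 0 \<le> yc C d \<and> yc C d \<le> 1) \<and>
     (\<forall>C\<in>Cs. \<forall>d\<in>D C. \<forall>l\<in>C. yc C d \<le> yv l (d l))"

lemma cvx01: "0 \<le> a \<Longrightarrow> a \<le> 1 \<Longrightarrow> 0 \<le> b \<Longrightarrow> b \<le> 1 \<Longrightarrow> 0 \<le> \<alpha> \<Longrightarrow> \<alpha> \<le> 1 \<Longrightarrow>
   0 \<le> \<alpha> * a + (1-\<alpha>) * (b::real) \<and> \<alpha> * a + (1-\<alpha>) * b \<le> 1"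
proof
  assume h: "0 \<le> a" "a \<le> 1" "0 \<le> b" "b \<le> 1" "0 \<le> \<alpha>" "\<alpha> \<le> 1"
  show "0 \<le> \<alpha> * a + (1-\<alpha>) * b" using h by simp
  have "\<alpha> * a + (1-\<alpha>) * b \<le> \<alpha> * 1 + (1-\<alpha>) * 1" using h by (intro add_mono mult_left_mono) auto
  then show "\<alpha> * a + (1-\<alpha>) * b \<le> 1" by simp
qed

lemma inv: "x \<in> chull KK \<Longrightarrow> \<exists>yv yc. lp_box yv yc \<and> (\<forall>i\<in>V. fst x i = (\<Sum>p\<in>P. yv i p) - 1)
   \<and> snd x = lp_obj Cs D th yc"
proof (induction rule: chull.induct)
  case (base x)
  then obtain y where y: "y \<in> Y" "x = (av y, gz y)" by (auto simp: KK_def)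
  have yb: "0 \<le> y i p \<and> y i p \<le> 1" for i p using Ybin[OF y(1), of i p] by auto
  have "lp_box y (zy y)"
    unfolding lp_box_def using yb by (auto simp: zy_def)
  moreover have "\<forall>i\<in>V. fst x i = (\<Sum>p\<in>P. y i p) - 1" using y by (simp add: av_def)
  moreover have "snd x = lp_obj Cs D th (zy y)" using y by (simp add: gz_def lp_obj_def)
  ultimately show ?case by blast
next
  case (step x x' \<alpha>)
  from step.IH obtain yv1 yc1 yv2 yc2 where
    a: "lp_box yv1 yc1" "\<forall>i\<in>V. fst x i = (\<Sum>p\<in>P. yv1 i p) - 1" "snd x = lp_obj Cs D th yc1" and
    b: "lp_box yv2 yc2" "\<forall>i\<in>V. fst x' i = (\<Sum>p\<in>P. yv2 i p) - 1" "snd x' = lp_obj Cs D th yc2"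
    by blast
  define yv where "yv i p = \<alpha> * yv1 i p + (1-\<alpha>) * yv2 i p" for i p
  define yc where "yc C d = \<alpha> * yc1 C d + (1-\<alpha>) * yc2 C d" for C d
  have "lp_box yv yc"
    unfolding lp_box_def
  proof (intro conjI ballI)
    fix i p assume "i \<in> V" "p \<in> P"
    then show "0 \<le> yv i p" "yv i p \<le> 1" unfolding yv_def
      using cvx01[of "yv1 i p" "yv2 i p" \<alpha>] a(1) b(1) step.hyps by (auto simp: lp_box_def)
  next
    fix C d assume "C \<in> Cs" "d \<in> D C"
    then show "0 \<le> yc C d" "yc C d \<le> 1" unfolding yc_def
      using cvx01[of "yc1 C d" "yc2 C d" \<alpha>] a(1) b(1) step.hyps by (auto simp: lp_box_def)
  next
    fix C d l assume "C \<in> Cs" "d \<in> D C" "l \<in> C"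
    then show "yc C d \<le> yv l (d l)" unfolding yc_def yv_def
      using a(1) b(1) step.hyps by (intro add_mono mult_left_mono) (auto simp: lp_box_def)
  qed
  moreover have "\<forall>i\<in>V. fst (comb \<alpha> x x') i = (\<Sum>p\<in>P. yv i p) - 1"
  proof
    fix i assume i: "i \<in> V"
    have "(\<Sum>p\<in>P. yv i p) = \<alpha> * (\<Sum>p\<in>P. yv1 i p) + (1-\<alpha>) * (\<Sum>p\<in>P. yv2 i p)"
      by (simp add: yv_def sum.distrib sum_distrib_left)
    moreover have "fst (comb \<alpha> x x') i = \<alpha> * ((\<Sum>p\<in>P. yv1 i p) - 1) + (1-\<alpha>) * ((\<Sum>p\<in>P. yv2 i p) - 1)"
      using a(2) b(2) i by (simp add: comb_def)
    ultimately show "fst (comb \<alpha> x x') i = (\<Sum>p\<in>P. yv i p) - 1"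
      by (simp add: algebra_simps)
  qed
  moreover have "snd (comb \<alpha> x x') = lp_obj Cs D th yc"
  proof -
    have "lp_obj Cs D th yc = \<alpha> * lp_obj Cs D th yc1 + (1-\<alpha>) * lp_obj Cs D th yc2"
      by (simp add: lp_obj_def yc_def sum.distrib sum_distrib_left distrib_left mult.left_commute)
    then show ?thesis using a(3) b(3) by (simp add: comb_def)
  qed
  ultimately show ?case by blast
qed

lemma mC_bin: "y \<in> Y \<Longrightarrow> C \<in> Cs \<Longrightarrow> d \<in> D C \<Longrightarrow> mC y C d = zy y C d"
proof -
  assume y: "y \<in> Y" and C: "C \<in> Cs" and d: "d \<in> D C"
  show ?thesis
  proof (cases "\<forall>l\<in>C. y l (d l) = 1")
    case True
    then have "(\<lambda>l. y l (d l)) ` C = {1}" using CV[OF C] by auto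
    then show ?thesis using True by (simp add: mC_def zy_def)
  next
    case False
    then obtain l0 where l0: "l0 \<in> C" "y l0 (d l0) = 0" using Ybin[OF y] by blast
    have "\<forall>l\<in>C. 0 \<le> y l (d l)" using Ybin[OF y] by (metis order.refl zero_le_one)
    then have "mC y C d = 0" unfolding mC_def using min0[OF finC[OF C] l0(1), of "\<lambda>l. y l (d l)"] l0(2) by blast
    then show ?thesis using False by (simp add: zy_def)
  qed
qed

lemma pt_Y: "y \<in> Y \<Longrightarrow> pt y = (av y, gz y)"
  unfolding pt_def gz_def by (simp add: mC_bin cong: sum.cong)

definition "Fr x = {ip \<in> V \<times> P. 0 < x (fst ip) (snd ip) \<and> x (fst ip) (snd ip) < 1}"

lemma fFr: "finite (Fr x)"
proof -
  have "Fr x \<subseteq> V \<times> P" by (auto simp: Fr_def)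
  then show ?thesis using fV fP finite_subset by blast
qed

lemma decomp: "(\<forall>i p. 0 \<le> x i p \<and> x i p \<le> 1) \<Longrightarrow> (\<forall>i p. (i \<notin> V \<or> p \<notin> P) \<longrightarrow> x i p = 0)
   \<Longrightarrow> pt x \<in> chull KK"
proof (induction "card (Fr x)" arbitrary: x rule: less_induct)
  case less
  note rng = less.prems(1) and can = less.prems(2)
  show ?case
  proof (cases "Fr x = {}")
    case True
    have "x \<in> Y" unfolding Y_def mem_Collect_eq
    proof (intro conjI allI)
      fix i p
      show "x i p \<in> {0,1}"
      proof (cases "i \<in> V \<and> p \<in> P")
        case True
        then have "\<not> (0 < x i p \<and> x i p < 1)" using \<open>Fr x = {}\<close> by (auto simp: Fr_def)
        then show ?thesis using rng[rule_format, of i p] by auto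
      next
        case False then show ?thesis using can by auto
      qed
      show "(i \<notin> V \<or> p \<notin> P) \<longrightarrow> x i p = 0" using can by auto
    qed
    then show ?thesis using pt_Y by (auto simp: KK_def intro: chull.base)
  next
    case False
    define s where "s = Min ((\<lambda>ip. x (fst ip) (snd ip)) ` Fr x)"
    have "s \<in> (\<lambda>ip. x (fst ip) (snd ip)) ` Fr x" unfolding s_def
      by (rule Min_in) (use fFr False in auto)
    then obtain i0 p0 where ip0: "(i0,p0) \<in> Fr x" "x i0 p0 = s" by auto
    have s01: "0 < s" "s < 1" using ip0 by (auto simp: Fr_def)
    have ge: "s \<le> x i p" if "0 < x i p" for i p
    proof (cases "(i,p) \<in> Fr x")
      case True
      have "x i p = (\<lambda>ip. x (fst ip) (snd ip)) (i,p)" by simp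
      then have "x i p \<in> (\<lambda>ip. x (fst ip) (snd ip)) ` Fr x" using True by (rule image_eqI)
      then show ?thesis unfolding s_def by (rule Min_le[OF finite_imageI[OF fFr]])
    next
      case False
      have "i \<in> V \<and> p \<in> P"
      proof (rule ccontr)
        assume "\<not> (i \<in> V \<and> p \<in> P)"
        then have "x i p = 0" using can by blast
        then show False using that by simp
      qed
      then have "\<not> (0 < x i p \<and> x i p < 1)" using False by (simp add: Fr_def)
      moreover have "x i p \<le> 1" using rng by blast
      ultimately have "x i p = 1" using that by linarith
      then show ?thesis using s01 by simp
    qed
    define chi where "chi i p = (if 0 < x i p then 1 else 0::real)" for i p
    define x' where "x' i p = (if 0 < x i p then (x i p - s) / (1 - s) else 0)" for i p
    have px: "x i p = s * chi i p + (1-s) * x' i p" for i p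
    proof (cases "0 < x i p")
      case True then show ?thesis using s01 by (simp add: chi_def x'_def)
    next
      case False then show ?thesis using rng[rule_format, of i p] by (simp add: chi_def x'_def)
    qed
    have chi_r: "\<forall>i p. 0 \<le> chi i p \<and> chi i p \<le> 1" by (simp add: chi_def)
    have chi_c: "\<forall>i p. (i \<notin> V \<or> p \<notin> P) \<longrightarrow> chi i p = 0" using can by (simp add: chi_def)
    have x'_r: "\<forall>i p. 0 \<le> x' i p \<and> x' i p \<le> 1"
    proof (intro allI)
      fix i p
      show "0 \<le> x' i p \<and> x' i p \<le> 1"
      proof (cases "0 < x i p")
        case True
        then have "s \<le> x i p" "x i p \<le> 1" using ge rng by auto
        then show ?thesis using True s01 by (simp add: x'_def divide_le_eq_1)
      next
        case False then show ?thesis by (simp add: x'_def)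
      qed
    qed
    have x'_c: "\<forall>i p. (i \<notin> V \<or> p \<notin> P) \<longrightarrow> x' i p = 0" using can by (simp add: x'_def)
    have Frchi: "Fr chi = {}" by (auto simp: Fr_def chi_def)
    have cx: "card (Fr x) > 0" using fFr False by (simp add: card_gt_0_iff)
    have sub: "Fr x' \<subset> Fr x"
    proof
      show "Fr x' \<subseteq> Fr x"
      proof
        fix ip assume a: "ip \<in> Fr x'"
        obtain i p where ip: "ip = (i,p)" by fastforce
        have h: "i \<in> V" "p \<in> P" "0 < x' i p" "x' i p < 1" using a ip by (auto simp: Fr_def)
        then have xp: "0 < x i p" by (simp add: x'_def split: if_splits)
        have "x i p \<noteq> 1" using h xp s01 by (auto simp: x'_def)
        then have "x i p < 1" using rng[rule_format, of i p] by auto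
        then show "ip \<in> Fr x" using h xp ip by (simp add: Fr_def)
      qed
      have "x' i0 p0 = 0" using ip0 s01 by (simp add: x'_def)
      then have "(i0,p0) \<notin> Fr x'" by (simp add: Fr_def)
      then show "Fr x' \<noteq> Fr x" using ip0 by auto
    qed
    have IH1: "pt chi \<in> chull KK" using less.hyps[of chi] Frchi cx chi_r chi_c by simp
    have IH2: "pt x' \<in> chull KK" using less.hyps[of x'] psubset_card_mono[OF fFr sub] x'_r x'_c by simp
    have mCd: "mC x C d = s * mC chi C d + (1-s) * mC x' C d" if C: "C \<in> Cs" for C d
    proof (cases "\<forall>l\<in>C. 0 < x l (d l)")
      case True
      have fC: "finite C" and neC: "C \<noteq> {}" using finC[OF C] CV[OF C] by auto
      have "(\<lambda>l. chi l (d l)) ` C = {1}" using True neC by (auto simp: chi_def)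
      then have m1: "mC chi C d = 1" by (simp add: mC_def)
      define f where "f u = (u - s) / (1 - s)" for u
      have mf: "mono f" unfolding f_def mono_def using s01 by (auto intro: divide_right_mono)
      have "(\<lambda>l. x' l (d l)) ` C = f ` ((\<lambda>l. x l (d l)) ` C)"
        using True by (auto simp: x'_def f_def image_image)
      then have "mC x' C d = f (mC x C d)"
        unfolding mC_def using mono_Min_commute[OF mf, of "(\<lambda>l. x l (d l)) ` C"] fC neC by simp
      then show ?thesis using m1 s01 by (simp add: f_def)
    next
      case False
      then obtain l0 where l0: "l0 \<in> C" "\<not> 0 < x l0 (d l0)" by blast
      have fC: "finite C" using finC[OF C] .
      have z: "x l0 (d l0) = 0" using l0 rng[rule_format, of l0 "d l0"] by auto
      have "mC x C d = 0" unfolding mC_def by (rule min0[OF fC l0(1)]) (use rng z in auto)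
      moreover have "mC chi C d = 0" unfolding mC_def by (rule min0[OF fC l0(1)]) (use chi_r z in \<open>auto simp: chi_def\<close>)
      moreover have "mC x' C d = 0" unfolding mC_def by (rule min0[OF fC l0(1)]) (use x'_r z in \<open>auto simp: x'_def\<close>)
      ultimately show ?thesis by simp
    qed
    have "pt x = comb s (pt chi) (pt x')"
    proof -
      have a: "av x = (\<lambda>i. s * av chi i + (1-s) * av x' i)"
      proof
        fix i
        have "(\<Sum>p\<in>P. x i p) = s * (\<Sum>p\<in>P. chi i p) + (1-s) * (\<Sum>p\<in>P. x' i p)"
          by (subst px) (simp add: sum.distrib sum_distrib_left)
        then show "av x i = s * av chi i + (1-s) * av x' i" by (simp add: av_def algebra_simps)
      qed
      have b: "(\<Sum>C\<in>Cs. \<Sum>d\<in>D C. th C d * mC x C d)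
          = s * (\<Sum>C\<in>Cs. \<Sum>d\<in>D C. th C d * mC chi C d) + (1-s) * (\<Sum>C\<in>Cs. \<Sum>d\<in>D C. th C d * mC x' C d)"
        by (simp add: mCd sum.distrib sum_distrib_left distrib_left mult.left_commute cong: sum.cong)
      show ?thesis unfolding pt_def comb_def using a b by simp
    qed
    then show ?thesis using IH1 IH2 s01 by (auto intro: chull.step)
  qed
qed

lemma lp_lower: "lp_feasible V P Cs D yv yc \<Longrightarrow> \<exists>x\<in>chull KK. (\<forall>i\<in>V. fst x i = 0) \<and> snd x \<le> lp_obj Cs D th yc"
proof -
  assume f: "lp_feasible V P Cs D yv yc"
  define x where "x = cy yv"
  have r: "\<forall>i p. 0 \<le> x i p \<and> x i p \<le> 1" using f by (auto simp: x_def cy_def lp_feasible_def)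
  have c: "\<forall>i p. (i \<notin> V \<or> p \<notin> P) \<longrightarrow> x i p = 0" by (auto simp: x_def cy_def)
  have m: "pt x \<in> chull KK" using decomp r c by blast
  have z: "\<forall>i\<in>V. fst (pt x) i = 0" using f by (simp add: pt_def av_def x_def cy_def lp_feasible_def)
  have "snd (pt x) \<le> lp_obj Cs D th yc"
    unfolding pt_def lp_obj_def snd_conv
  proof (intro sum_mono)
    fix C d assume C: "C \<in> Cs" and d: "d \<in> D C"
    have "yc C d \<le> mC x C d" unfolding mC_def
    proof (rule Min.boundedI)
      show "finite ((\<lambda>l. x l (d l)) ` C)" using finC[OF C] by simp
      show "(\<lambda>l. x l (d l)) ` C \<noteq> {}" using CV[OF C] by simp
      fix a assume "a \<in> (\<lambda>l. x l (d l)) ` C"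
      then obtain l where l: "l \<in> C" "a = x l (d l)" by auto
      then show "yc C d \<le> a" using f dl[OF C d l(1)] C d by (auto simp: lp_feasible_def x_def cy_def)
    qed
    then show "th C d * mC x C d \<le> th C d * yc C d" using thn[OF C d] by (rule mult_left_mono_neg)
  qed
  then show ?thesis using m z by blast
qed

lemma main: "\<exists>lam0 yv0 yc0.
           (\<forall>lam. lagr_dual V P Cs D th lam \<le> lagr_dual V P Cs D th lam0) \<and>
           lp_feasible V P Cs D yv0 yc0 \<and>
           (\<forall>yv yc. lp_feasible V P Cs D yv yc \<longrightarrow> lp_obj Cs D th yc0 \<le> lp_obj Cs D th yc) \<and>
           lagr_dual V P Cs D th lam0 = lp_obj Cs D th yc0"
proof -
  obtain p0 where p0: "p0 \<in> P" using neP by blast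
  define y1 where "y1 i p = (if i \<in> V \<and> p = p0 then 1 else 0::real)" for i p
  have y1Y: "y1 \<in> Y" using p0 by (auto simp: Y_def y1_def)
  have y1a: "\<forall>i\<in>V. av y1 i = 0" using p0 fP by (simp add: av_def y1_def)
  define Sv where "Sv = {snd x | x. x \<in> chull KK \<and> (\<forall>i\<in>V. fst x i = 0)}"
  have "(av y1, gz y1) \<in> chull KK" using y1Y by (auto simp: KK_def intro: chull.base)
  then have neSv: "gz y1 \<in> Sv" using y1a by (force simp: Sv_def)
  have lb: "Min (SS lam) \<le> s" if "s \<in> Sv" for lam s
  proof -
    obtain x where x: "x \<in> chull KK" "\<forall>i\<in>V. fst x i = 0" "s = snd x" using \<open>s \<in> Sv\<close> unfolding Sv_def by blast
    have "Min (SS lam) \<le> snd x + (\<Sum>i\<in>V. lam i * fst x i)" by (rule weak[OF x(1)])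
    moreover have "(\<Sum>i\<in>V. lam i * fst x i) = 0" using x(2) by simp
    ultimately show ?thesis using x(3) by simp
  qed
  have bdd: "bdd_below Sv" using lb[of _ "\<lambda>_. 0"] unfolding bdd_below_def by blast
  define v where "v = Inf Sv"
  have vle: "v \<le> s" if "s \<in> Sv" for s unfolding v_def using cInf_lower[OF that bdd] .
  have Dle: "Min (SS lam) \<le> v" for lam
    unfolding v_def using neSv lb by (intro cInf_greatest) auto
  have hyp: "\<forall>x\<in>chull KK. (\<forall>i\<in>V. fst x i = 0) \<longrightarrow> v \<le> snd x"
  proof (intro ballI impI)
    fix x assume "x \<in> chull KK" "\<forall>i\<in>V. fst x i = 0"
    then have "snd x \<in> Sv" unfolding Sv_def by blast
    then show "v \<le> snd x" by (rule vle)
  qed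
  obtain lam0 where lam0: "\<forall>k\<in>KK. v \<le> snd k + (\<Sum>i\<in>V. lam0 i * fst k i)"
    using fm[OF fV finK hyp] by blast
  have "v \<le> Min (SS lam0)" using lam0 by (intro D_ge) (auto simp: KK_def)
  then have Dv: "Min (SS lam0) = v" using Dle[of lam0] by simp
  have "\<exists>x\<in>chull KK. (\<forall>i\<in>V. fst x i = 0) \<and> snd x \<le> v"
  proof (rule ccontr)
    assume "\<not> ?thesis"
    then have h: "\<forall>x\<in>chull KK. (\<forall>i\<in>V. fst x i = 0) \<longrightarrow> v < snd x" by force
    obtain lam1 where "\<forall>k\<in>KK. v < snd k + (\<Sum>i\<in>V. lam1 i * fst k i)"
      using fm_strict[OF fV finK h] by blast
    then have "v < Min (SS lam1)" by (intro D_gt) (auto simp: KK_def)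
    then show False using Dle[of lam1] by simp
  qed
  then obtain x0 where x0: "x0 \<in> chull KK" "\<forall>i\<in>V. fst x0 i = 0" "snd x0 \<le> v" by blast
  obtain yv0 yc0 where y0: "lp_box yv0 yc0" "\<forall>i\<in>V. fst x0 i = (\<Sum>p\<in>P. yv0 i p) - 1"
     "snd x0 = lp_obj Cs D th yc0" using inv[OF x0(1)] by blast
  have feas: "lp_feasible V P Cs D yv0 yc0" using y0 x0(2) by (auto simp: lp_feasible_def lp_box_def)
  have opt: "v \<le> lp_obj Cs D th yc" if fe: "lp_feasible V P Cs D yv yc" for yv yc
  proof -
    obtain x where x: "x \<in> chull KK" "\<forall>i\<in>V. fst x i = 0" "snd x \<le> lp_obj Cs D th yc"
      using lp_lower[OF fe] by blast
    then have "snd x \<in> Sv" using x unfolding Sv_def by blast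
    then show ?thesis using vle x(3) by force
  qed
  have eq: "lp_obj Cs D th yc0 = v" using opt[OF feas] x0(3) y0(3) by simp
  show ?thesis
    apply (rule exI[of _ lam0], rule exI[of _ yv0], rule exI[of _ yc0])
    using Dle Dv feas opt eq by (simp add: LD)
qed

end

theorem theorem5:
  fixes V :: "'v set" and P :: "'p set" and Cs :: "'v set set"
    and D :: "'v set \<Rightarrow> ('v \<Rightarrow> 'p) set"
    and th :: "'v set \<Rightarrow> ('v \<Rightarrow> 'p) \<Rightarrow> real"
  assumes "finite V" and "finite P" and "P \<noteq> {}"
    and "finite Cs"
    and "\<And>C. C \<in> Cs \<Longrightarrow> C \<noteq> {} \<and> C \<subseteq> V"
    and "\<And>C. C \<in> Cs \<Longrightarrow> D C \<subseteq> (C \<rightarrow>\<^sub>E P)"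
    and "\<And>C d. C \<in> Cs \<Longrightarrow> d \<in> D C \<Longrightarrow> th C d \<le> 0"
  shows "\<exists>lam0 yv0 yc0.
           (\<forall>lam. lagr_dual V P Cs D th lam \<le> lagr_dual V P Cs D th lam0) \<and>
           lp_feasible V P Cs D yv0 yc0 \<and>
           (\<forall>yv yc. lp_feasible V P Cs D yv yc \<longrightarrow> lp_obj Cs D th yc0 \<le> lp_obj Cs D th yc) \<and>
           lagr_dual V P Cs D th lam0 = lp_obj Cs D th yc0"
  using main[OF assms] .

end
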